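(* Assume $q$ is not identically zero. As $t\to\infty$, $\eta(Z^{(1)}_t)/\eta(r_t)$ is bounded away from zero and infinity in probability.
   Context: Fix $\alpha\ge 2$. Let $(\xi_0(z))_{z\in\mathbb Z}$ be i.i.d. Pareto with $\mathrm{Prob}(\xi_0(z)>x)=x^{-\alpha}$, $x\ge1$. Let $p:\mathbb N\to[0,1]$ be eventually nondecreasing with $p(n)\to1$, $q=1-p$ (extended to $(0,\infty)$ by $q(x)=q(\lceil x\rceil)$). Define $\xi(n)=\xi_0(n)$ for $n\ge0$ and, independently for each $n\ge1$, $\xi(-n)=\xi_0(n)$ with probability $p(n)$, $\xi(-n)=\xi_0(-n)$ with probability $q(n)$. Let $D=\{z\in\mathbb N_0:\xi(z)=\xi(-z)\}$, $\Psi_t(z)=\xi(z)-\frac{|z|}{t}\log\xi(z)$, $Z^{(1)}_t$ a maximiser of $\Psi_t$ over $D$. Let $\eta(x)=\int_0^xq(u)du$ (so $\eta(n)=\sum_{z=1}^nq(z)$ for integer $n$) and $r_t=(t/\log t)^{\alpha/(\alpha-1)}$. *)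

theory Defs
  imports "HOL-Probability.Probability"
begin

text \<open>The field xi built from the i.i.d. field xi0 and the coins:
  coin n = True means xi(-n) = xi0(n) (probability p n).\<close>
definition xi :: "(int \<Rightarrow> 'a \<Rightarrow> real) \<Rightarrow> (nat \<Rightarrow> 'a \<Rightarrow> bool) \<Rightarrow> 'a \<Rightarrow> int \<Rightarrow> real" where
  "xi xi0 coin \<omega> z =
     (if z \<ge> 0 then xi0 z \<omega>
      else (if coin (nat (- z)) \<omega> then xi0 (- z) \<omega> else xi0 z \<omega>))"

definition Dset :: "(int \<Rightarrow> 'a \<Rightarrow> real) \<Rightarrow> (nat \<Rightarrow> 'a \<Rightarrow> bool) \<Rightarrow> 'a \<Rightarrow> nat set" where
  "Dset xi0 coin \<omega> = {z. xi xi0 coin \<omega> (int z) = xi xi0 coin \<omega> (- int z)}"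

definition Psi :: "(int \<Rightarrow> 'a \<Rightarrow> real) \<Rightarrow> (nat \<Rightarrow> 'a \<Rightarrow> bool) \<Rightarrow> real \<Rightarrow> 'a \<Rightarrow> int \<Rightarrow> real" where
  "Psi xi0 coin t \<omega> z = xi xi0 coin \<omega> z - (real_of_int \<bar>z\<bar> / t) * ln (xi xi0 coin \<omega> z)"

definition is_max :: "(int \<Rightarrow> 'a \<Rightarrow> real) \<Rightarrow> (nat \<Rightarrow> 'a \<Rightarrow> bool) \<Rightarrow> real \<Rightarrow> 'a \<Rightarrow> nat \<Rightarrow> bool" where
  "is_max xi0 coin t \<omega> z \<longleftrightarrow> z \<in> Dset xi0 coin \<omega> \<and>
     (\<forall>y \<in> Dset xi0 coin \<omega>. Psi xi0 coin t \<omega> (int y) \<le> Psi xi0 coin t \<omega> (int z))"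

definition eta :: "(nat \<Rightarrow> real) \<Rightarrow> real \<Rightarrow> real" where
  "eta q x = integral {0..x} (\<lambda>u. q (nat \<lceil>u\<rceil>))"

definition r_scale :: "real \<Rightarrow> real \<Rightarrow> real" where
  "r_scale \<alpha> t = (t / ln t) powr (\<alpha> / (\<alpha> - 1))"

end

theory Submission
  imports Defs "HOL-Real_Asymp.Real_Asymp"
begin


context prob_space begin
lemma block_prob:
  fixes xi0 :: "int \<Rightarrow> 'a \<Rightarrow> real" and coin :: "nat \<Rightarrow> 'a \<Rightarrow> bool"
  assumes indep: "indep_vars (\<lambda>_. borel)
          (\<lambda>i \<omega>. case i of Inl z \<Rightarrow> xi0 z \<omega> | Inr n \<Rightarrow> of_bool (coin n \<omega>))
          (range Inl \<union> Inr ` {1..})"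
    and J: "finite J" "J \<subseteq> {1..}" "J \<noteq> {}"
  shows "prob {\<omega>\<in>space M. \<forall>z\<in>J. \<not>(coin z \<omega> \<and> xi0 (int z) \<omega> > x)}
     = (\<Prod>z\<in>J. (1 - prob {\<omega>\<in>space M. coin z \<omega>} * prob {\<omega>\<in>space M. xi0 (int z) \<omega> > x}))"
proof -
  define X where "X = (\<lambda>i \<omega>. case i of Inl z \<Rightarrow> xi0 z \<omega> | Inr n \<Rightarrow> (of_bool (coin n \<omega>)::real))"
  define E where "E = (\<lambda>i. {X i -` A \<inter> space M | A. A \<in> sets (borel::real measure)})"
  have ind: "indep_sets E (range Inl \<union> Inr ` {1..})"
    using indep unfolding indep_vars_def2 E_def X_def by auto
  define I where "I = (\<lambda>z::nat. {Inl (int z), Inr z} :: (int + nat) set)"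
  have ind2: "indep_sets (\<lambda>z. sigma_sets (space M) (\<Union>i\<in>I z. E i)) J"
  proof (rule indep_sets_collect_sigma)
    show "indep_sets E (\<Union>j\<in>J. I j)"
      by (rule indep_sets_mono_index[OF _ ind]) (use J in \<open>auto simp: I_def\<close>)
    show "Int_stable (E i)" for i
      unfolding E_def Int_stable_def
      apply auto
      apply (rule_tac x="A \<inter> Aa" in exI)
      apply auto
      done
    show "disjoint_family_on I J"
      unfolding disjoint_family_on_def I_def by auto
  qed
  define C where "C = (\<lambda>z. {\<omega>\<in>space M. coin z \<omega>})"
  define Xe where "Xe = (\<lambda>z. {\<omega>\<in>space M. xi0 (int z) \<omega> > x})"
  have CE: "C z \<in> E (Inr z)" for z
    unfolding E_def C_def X_def
    apply simp apply (rule exI[of _ "{1::real}"]) by auto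
  have XE: "Xe z \<in> E (Inl (int z))" for z
    unfolding E_def Xe_def X_def
    apply simp apply (rule exI[of _ "{x<..}"]) by auto
  have Eev: "E i \<subseteq> events" if "i \<in> range Inl \<union> Inr ` {1..}" for i
    using ind that unfolding indep_sets_def by auto
  have Cev: "C z \<in> events" if "z \<in> J" for z using Eev[of "Inr z"] CE[of z] that J by auto
  have Xev: "Xe z \<in> events" for z using Eev[of "Inl (int z)"] XE[of z] by auto
  have prodCX: "prob (C z \<inter> Xe z) = prob (C z) * prob (Xe z)" if "z \<in> J" for z
  proof -
    have "prob (\<Inter>i\<in>{Inl (int z), Inr z}. (\<lambda>i. if i = Inr z then C z else Xe z) i)
        = (\<Prod>i\<in>{Inl (int z), Inr z}. prob ((\<lambda>i. if i = Inr z then C z else Xe z) i))"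
      by (rule indep_setsD[OF ind]) (use that J CE XE in auto)
    then show ?thesis by (simp add: Int_commute mult.commute)
  qed
  define A where "A = (\<lambda>z. space M - (C z \<inter> Xe z))"
  have Asig: "A z \<in> sigma_sets (space M) (\<Union>i\<in>I z. E i)" for z
  proof -
    have "C z \<in> sigma_sets (space M) (\<Union>i\<in>I z. E i)"
      using CE by (auto simp: I_def intro!: sigma_sets.Basic)
    moreover have "Xe z \<in> sigma_sets (space M) (\<Union>i\<in>I z. E i)"
      using XE by (auto simp: I_def intro!: sigma_sets.Basic)
    moreover have "\<Union>(E ` I z) \<subseteq> Pow (space M)" unfolding E_def by auto
    ultimately have "C z \<inter> Xe z \<in> sigma_sets (space M) (\<Union>i\<in>I z. E i)"
      using semiring_of_sets.Int[OF sigma_algebra.axioms(1)[THEN algebra.axioms(1), THEN ring_of_sets.axioms(1)], OF sigma_algebra_sigma_sets] by blast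
    then show ?thesis
      unfolding A_def by (intro sigma_sets.Compl) auto
  qed
  have "prob (\<Inter>z\<in>J. A z) = (\<Prod>z\<in>J. prob (A z))"
    by (rule indep_setsD[OF ind2]) (use J Asig in auto)
  moreover have "(\<Inter>z\<in>J. A z) = {\<omega>\<in>space M. \<forall>z\<in>J. \<not>(coin z \<omega> \<and> xi0 (int z) \<omega> > x)}"
    using J(3) by (auto simp: A_def C_def Xe_def)
  moreover have "prob (A z) = 1 - prob (C z) * prob (Xe z)" if "z \<in> J" for z
    unfolding A_def using prodCX[OF that] Cev[OF that] Xev
    by (subst prob_compl) auto
  ultimately show ?thesis by (simp add: C_def Xe_def)
qed
end


lemma eta_has_int:
  fixes q :: "nat \<Rightarrow> real"
  shows "((\<lambda>u. q (nat \<lceil>u\<rceil>)) has_integral (\<Sum>k=1..n. q k)) {0..real n}"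
proof (induction n)
  case 0
  then show ?case using has_integral_refl(2)[of "\<lambda>u. q (nat \<lceil>u\<rceil>)" "0::real"] by simp
next
  case (Suc n)
  have c: "((\<lambda>u. q (Suc n)) has_integral q (Suc n)) {real n..real n + 1}"
    using has_integral_const_real[of "q (Suc n)" "real n" "real n + 1"] by simp
  have "((\<lambda>u. q (nat \<lceil>u\<rceil>)) has_integral q (Suc n)) {real n..real n + 1}"
  proof (rule has_integral_spike_finite[of "{real n}" _ _ "\<lambda>u. q (Suc n)"])
    fix x assume "x \<in> {real n..real n + 1} - {real n}"
    then have "real n < x" "x \<le> real n + 1" by auto
    then have "\<lceil>x\<rceil> = int n + 1"
      by (intro ceiling_unique) auto
    then have "nat \<lceil>x\<rceil> = Suc n" by simp
    then show "q (nat \<lceil>x\<rceil>) = q (Suc n)" by simp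
  qed (use c in simp_all)
  from has_integral_combine[OF _ _ Suc this]
  show ?case by (simp add: add.commute)
qed

lemma eta_nat: "eta q (real n) = (\<Sum>k=1..n. q k)"
  unfolding eta_def using eta_has_int by (rule integral_unique)

lemma eta_mono:
  fixes q :: "nat \<Rightarrow> real"
  assumes q: "\<And>k. q k \<ge> 0" and xy: "0 \<le> x" "x \<le> y"
  shows "eta q x \<le> eta q y"
proof -
  define n where "n = nat \<lceil>y\<rceil>"
  have yn: "y \<le> real n" unfolding n_def by linarith
  have I: "(\<lambda>u. q (nat \<lceil>u\<rceil>)) integrable_on {0..real n}"
    using eta_has_int by blast
  have Ix: "(\<lambda>u. q (nat \<lceil>u\<rceil>)) integrable_on {0..x}"
    by (rule integrable_subinterval_real[OF I]) (use xy yn in auto)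
  have Iy: "(\<lambda>u. q (nat \<lceil>u\<rceil>)) integrable_on {0..y}"
    by (rule integrable_subinterval_real[OF I]) (use xy yn in auto)
  show ?thesis unfolding eta_def
    by (rule integral_subset_le) (use Ix Iy xy q in auto)
qed



lemma S_mono:
  fixes q :: "nat \<Rightarrow> real"
  assumes "\<And>k. q k \<ge> 0" "m \<le> n"
  shows "(\<Sum>k=1..m. q k) \<le> (\<Sum>k=1..n. q k)"
  by (rule sum_mono2) (use assms in auto)

lemma S_scale:
  fixes q :: "nat \<Rightarrow> real"
  assumes q0: "\<And>k. q k \<ge> 0"
    and N: "N \<ge> 1" and dec: "\<And>m n. N \<le> m \<Longrightarrow> m \<le> n \<Longrightarrow> q n \<le> q m"
    and m: "m \<ge> 2 * N" and k: "k \<ge> 1"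
  shows "(\<Sum>j=1..k*m. q j) \<le> 2 * real k * (\<Sum>j=1..m. q j)"
proof -
  define S where "S = (\<Sum>j=1..m. q j)"
  have S0: "S \<ge> 0" unfolding S_def by (rule sum_nonneg) (use q0 in auto)
  have mkm: "m \<le> k * m" using k by simp
  have "{1..k*m} = {1..m} \<union> {m+1..k*m}" using order_trans[OF _ mkm] by auto
  then have split: "(\<Sum>j=1..k*m. q j) = S + (\<Sum>j=m+1..k*m. q j)"
    unfolding S_def by (simp add: sum.union_disjoint ivl_disj_int)
  have tail: "(\<Sum>j=m+1..k*m. q j) \<le> real (card {m+1..k*m}) * q m"
    by (rule sum_bounded_above, rule dec) (use m in auto)
  have ctail: "card {m+1..k*m} = k*m - m" by simp
  have low: "real (card {N..m}) * q m \<le> (\<Sum>j=N..m. q j)"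
    by (rule sum_bounded_below, rule dec) auto
  have cN: "card {N..m} = m + 1 - N" by simp
  have "(\<Sum>j=N..m. q j) \<le> S" unfolding S_def
    by (rule sum_mono2) (use N q0 in auto)
  with low cN have "real (m + 1 - N) * q m \<le> S" by simp
  moreover have "real m \<le> 2 * real (m + 1 - N)" using m by linarith
  ultimately have mq: "real m * q m \<le> 2 * S"
    using q0[of m] mult_right_mono[of "real m" "2 * real (m + 1 - N)" "q m"] by linarith
  have "real (k*m - m) = (real k - 1) * real m" using mkm k
    by (simp add: of_nat_diff algebra_simps)
  then have "(\<Sum>j=m+1..k*m. q j) \<le> (real k - 1) * (real m * q m)"
    using tail ctail by (simp add: mult.assoc)
  also have "\<dots> \<le> (real k - 1) * (2 * S)"
    by (rule mult_left_mono[OF mq]) (use k in simp)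
  finally have "(\<Sum>j=m+1..k*m. q j) \<le> (real k - 1) * (2 * S)" .
  moreover have "(real k - 1)*(2*S) + S \<le> 2*real k * S" using S0 by (simp add: algebra_simps)
  ultimately show ?thesis using split unfolding S_def[symmetric] by linarith
qed


lemma psi_mono:
  fixes s x0 x :: real
  assumes "0 \<le> s" "s \<le> x0" "0 < x0" "x0 \<le> x"
  shows "x0 - s * ln x0 \<le> x - s * ln x"
proof -
  have "ln x - ln x0 = ln (x / x0)" using assms by (simp add: ln_div)
  also have "\<dots> \<le> x / x0 - 1" using assms by (intro ln_le_minus_one) auto
  also have "\<dots> = (x - x0) / x0" using assms by (simp add: field_simps)
  finally have h: "ln x - ln x0 \<le> (x - x0) / x0" .
  have "s * (ln x - ln x0) \<le> s * ((x - x0) / x0)"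
    using h assms by (intro mult_left_mono) auto
  also have "\<dots> \<le> x - x0"
  proof -
    have "s * ((x - x0) / x0) = (s / x0) * (x - x0)" by simp
    also have "\<dots> \<le> 1 * (x - x0)"
      using assms by (intro mult_right_mono) auto
    finally show ?thesis by simp
  qed
  finally show ?thesis by (simp add: algebra_simps)
qed

lemma tail_sum:
  fixes n :: nat and \<alpha> :: real
  assumes n: "n \<ge> 1" and \<alpha>: "\<alpha> \<ge> 2"
  shows "summable (\<lambda>i. real (n+i) powr (-\<alpha>)) \<and> (\<Sum>i. real (n+i) powr (-\<alpha>)) \<le> 2 * real n powr (1-\<alpha>)"
proof -
  define f where "f = (\<lambda>i. - 2 / real (n+i))"
  have "f \<longlonglongrightarrow> 0" unfolding f_def by real_asymp
  from telescope_sums[OF this]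
  have ts: "(\<lambda>i. f (Suc i) - f i) sums (2 / real n)" by (simp add: f_def)
  have fe: "f (Suc i) - f i = 2 / (real (n+i) * real (n+i+1))" for i
    using n by (simp add: f_def field_simps)
  define g where "g = (\<lambda>i. real n powr (2-\<alpha>) * (f (Suc i) - f i))"
  have gs: "g sums (real n powr (2-\<alpha>) * (2 / real n))"
    unfolding g_def by (rule sums_mult[OF ts])
  have le: "real (n+i) powr (-\<alpha>) \<le> g i" for i
  proof -
    define x where "x = real (n+i)"
    have x1: "x \<ge> 1" using n by (simp add: x_def)
    have "x powr (-\<alpha>) = x powr (2-\<alpha>) * x powr (-2)"
      by (simp add: powr_add[symmetric])
    also have "x powr (-2) = 1 / x^2"
      using x1 by (simp add: powr_minus_divide)
    also have "x powr (2-\<alpha>) \<le> real n powr (2-\<alpha>)"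
      using x1 \<alpha> n by (intro powr_mono2') (auto simp: x_def)
    then have "x powr (2-\<alpha>) * (1 / x^2) \<le> real n powr (2-\<alpha>) * (1/x^2)"
      by (intro mult_right_mono) auto
    also have "1 / x^2 \<le> 2 / (x * (x+1))"
    proof -
      have "x * (x+1) \<le> 2 * x^2" using x1 by (simp add: power2_eq_square algebra_simps)
      then have "2 / (2 * x^2) \<le> 2 / (x * (x+1))"
        using x1 by (intro frac_le) auto
      then show ?thesis by simp
    qed
    then have "real n powr (2-\<alpha>) * (1/x^2) \<le> real n powr (2-\<alpha>) * (2 / (x * (x+1)))"
      by (intro mult_left_mono) auto
    finally show ?thesis using fe[of i] by (simp add: g_def x_def add.commute)
  qed
  have nn: "0 \<le> real (n+i) powr (-\<alpha>)" for i by simp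
  have sm: "summable (\<lambda>i. real (n+i) powr (-\<alpha>))"
    by (rule summable_comparison_test'[of g 0]) (use le gs in \<open>auto simp: sums_summable\<close>)
  have "(\<Sum>i. real (n+i) powr (-\<alpha>)) \<le> (\<Sum>i. g i)"
    by (rule suminf_le) (use le sm gs in \<open>auto simp: sums_summable\<close>)
  also have "\<dots> = real n powr (2-\<alpha>) * (2 / real n)" using gs by (simp add: sums_iff)
  also have "\<dots> = 2 * real n powr (1-\<alpha>)"
  proof -
    have e: "2-\<alpha> = (1-\<alpha>) + 1" by simp
    have "real n powr (2-\<alpha>) = real n powr (1-\<alpha>) * real n powr 1"
      unfolding e by (rule powr_add)
    then show ?thesis using n by simp
  qed
  finally show ?thesis using sm by simp
qed

lemma prod_exp_bound:
  fixes u :: "nat \<Rightarrow> real"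
  assumes "finite J" "\<And>z. z \<in> J \<Longrightarrow> 0 \<le> u z \<and> u z \<le> 1"
  shows "(\<Prod>z\<in>J. (1 - u z)) \<le> exp (- (\<Sum>z\<in>J. u z))"
proof -
  have "(\<Prod>z\<in>J. (1 - u z)) \<le> (\<Prod>z\<in>J. exp (- u z))"
    by (rule prod_mono) (use assms(2) exp_ge_add_one_self[of "- u _"] in force)
  also have "\<dots> = exp (- (\<Sum>z\<in>J. u z))"
    using assms(1) by (simp add: exp_sum[symmetric] sum_negf)
  finally show ?thesis .
qed

lemma a_at_top:
  fixes \<alpha> :: real assumes "\<alpha> \<ge> 2"
  shows "filterlim (\<lambda>t. (t / ln t) powr (1/(\<alpha>-1))) at_top at_top"
proof -
  have "filterlim (\<lambda>t::real. t / ln t) at_top at_top" by real_asymp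
  moreover have "1/(\<alpha>-1) > 0" using assms by simp
  ultimately show ?thesis
    using filterlim_compose[OF real_powr_at_top[of "1/(\<alpha>-1)"]] by blast
qed

lemma lnln_ev: "eventually (\<lambda>t::real. ln (ln t) \<le> ln t / 2) at_top"
  by real_asymp



context prob_space begin

lemma B2_bound:
  fixes xi0 :: "int \<Rightarrow> 'a \<Rightarrow> real"
  assumes meas: "\<And>z. xi0 z \<in> borel_measurable M"
    and pareto: "\<And>z x. x \<ge> 1 \<Longrightarrow> prob {\<omega> \<in> space M. xi0 z \<omega> > x} = x powr (- \<alpha>)"
    and x: "x \<ge> 1"
  shows "prob {\<omega>\<in>space M. \<exists>z\<le>Mn. xi0 (int z) \<omega> > x} \<le> real (Mn+1) * x powr (-\<alpha>)"
proof -
  have eq: "{\<omega>\<in>space M. \<exists>z\<le>Mn. xi0 (int z) \<omega> > x} = (\<Union>z\<in>{..Mn}. {\<omega>\<in>space M. xi0 (int z) \<omega> > x})"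
    by auto
  have "prob (\<Union>z\<in>{..Mn}. {\<omega>\<in>space M. xi0 (int z) \<omega> > x}) \<le> (\<Sum>z\<in>{..Mn}. prob {\<omega>\<in>space M. xi0 (int z) \<omega> > x})"
    by (rule finite_measure_subadditive_finite) (use meas in auto)
  also have "\<dots> = real (Mn+1) * x powr (-\<alpha>)" using pareto[OF x] by simp
  finally show ?thesis using eq by simp
qed

lemma B3_bound:
  fixes xi0 :: "int \<Rightarrow> 'a \<Rightarrow> real" and b :: "nat \<Rightarrow> real"
  assumes meas: "\<And>z. xi0 z \<in> borel_measurable M"
    and pareto: "\<And>z x. x \<ge> 1 \<Longrightarrow> prob {\<omega> \<in> space M. xi0 z \<omega> > x} = x powr (- \<alpha>)"
    and b: "\<And>z. z \<ge> n \<Longrightarrow> b z \<ge> 1"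
    and sm: "summable (\<lambda>i. b (n+i) powr (-\<alpha>))"
  shows "prob {\<omega>\<in>space M. \<exists>z\<ge>n. xi0 (int z) \<omega> > b z} \<le> (\<Sum>i. b (n+i) powr (-\<alpha>))"
proof -
  define A where "A = (\<lambda>i. {\<omega>\<in>space M. xi0 (int (n+i)) \<omega> > b (n+i)})"
  have eq: "{\<omega>\<in>space M. \<exists>z\<ge>n. xi0 (int z) \<omega> > b z} = (\<Union>i. A i)"
  proof (intro equalityI subsetI)
    fix \<omega> assume "\<omega> \<in> {\<omega>\<in>space M. \<exists>z\<ge>n. xi0 (int z) \<omega> > b z}"
    then obtain z where "\<omega> \<in> space M" "z \<ge> n" "xi0 (int z) \<omega> > b z" by auto
    then show "\<omega> \<in> (\<Union>i. A i)" unfolding A_def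
      by (intro UN_I[of "z - n"]) auto
  next
    fix \<omega> assume "\<omega> \<in> (\<Union>i. A i)"
    then obtain i where "\<omega> \<in> A i" by auto
    then show "\<omega> \<in> {\<omega>\<in>space M. \<exists>z\<ge>n. xi0 (int z) \<omega> > b z}"
      unfolding A_def by (intro CollectI conjI exI[of _ "n+i"]) auto
  qed
  have pA: "prob (A i) = b (n+i) powr (-\<alpha>)" for i
    unfolding A_def using pareto b[of "n+i"] by simp
  have "prob (\<Union>i. A i) \<le> (\<Sum>i. prob (A i))"
    by (rule finite_measure_subadditive_countably) (use meas sm pA in \<open>auto simp: A_def\<close>)
  then show ?thesis using eq pA by simp
qed

end

lemma det_core:
  fixes xi0 :: "int \<Rightarrow> 'a \<Rightarrow> real" and coin :: "nat \<Rightarrow> 'a \<Rightarrow> bool"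
  assumes max: "is_max xi0 coin t \<omega> Zt"
    and gt1: "\<forall>z. xi0 z \<omega> > 1"
    and t: "t > 0" and y: "y > 1"
    and zs: "zs \<in> Dset xi0 coin \<omega>" "Psi xi0 coin t \<omega> (int zs) \<ge> y"
    and low: "\<forall>z\<le>Mn. xi0 (int z) \<omega> \<le> y/2"
    and high: "\<forall>z\<ge>n. xi0 (int z) \<omega> \<le> (real z / t) * ln y / 2"
    and n: "n \<ge> 1"
  shows "Mn < Zt \<and> Zt < n"
proof -
  have psi: "Psi xi0 coin t \<omega> (int z) = xi0 (int z) \<omega> - (real z / t) * ln (xi0 (int z) \<omega>)" for z
    by (simp add: Psi_def xi_def)
  have PZ: "Psi xi0 coin t \<omega> (int Zt) \<ge> y"
    using max zs unfolding is_max_def by force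
  define x where "x = xi0 (int Zt) \<omega>"
  have x1: "x > 1" using gt1 by (simp add: x_def)
  have lnx: "ln x > 0" using x1 by simp
  have PZ': "x - (real Zt / t) * ln x \<ge> y" using PZ psi[of Zt] by (simp add: x_def)
  have s0: "real Zt / t \<ge> 0" using t by simp
  have A: "Mn < Zt"
  proof (rule ccontr)
    assume "\<not> Mn < Zt"
    then have "x \<le> y/2" using low by (simp add: x_def)
    moreover have "(real Zt / t) * ln x \<ge> 0" using s0 lnx by (intro mult_nonneg_nonneg) auto
    ultimately show False using PZ' y by linarith
  qed
  have B: "Zt < n"
  proof (rule ccontr)
    assume "\<not> Zt < n"
    then have Zn: "Zt \<ge> n" by simp
    then have hx: "x \<le> (real Zt / t) * ln y / 2" using high by (simp add: x_def)
    have sp: "real Zt / t > 0" using t Zn n by simp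
    show False
    proof (cases "x \<le> y")
      case True
      have "(real Zt / t) * ln x > 0" using sp lnx by (intro mult_pos_pos)
      then show False using PZ' True by linarith
    next
      case False
      then have "ln x > ln y" using y by simp
      then have "(real Zt / t) * ln x > (real Zt / t) * ln y" using sp by (intro mult_strict_left_mono)
      then show False using PZ' hx x1 y by argo
    qed
  qed
  show ?thesis using A B by simp
qed



lemma ratio_bounds:
  fixes q :: "nat \<Rightarrow> real" and r \<delta> K :: real
  assumes q0: "\<And>k. 0 \<le> q k" and N: "N \<ge> 1"
    and dec: "\<And>m n. N \<le> m \<Longrightarrow> m \<le> n \<Longrightarrow> q n \<le> q m"
    and n0: "n0 \<ge> 1" "q n0 > 0"
    and \<delta>: "\<delta> > 0" and K: "K \<ge> 1"
    and r1: "r \<ge> K + 1" and r2: "\<delta> * r \<ge> 2 * real N" and r3: "r \<ge> 2 * real N + real n0"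
    and Z1: "nat \<lfloor>\<delta> * r\<rfloor> < Zt" and Z2: "Zt \<le> nat \<lfloor>K * r\<rfloor>"
  shows "1 / (2 * real (nat \<lceil>1/\<delta>\<rceil>)) \<le> eta q (real Zt) / eta q r
       \<and> eta q (real Zt) / eta q r \<le> 2 * real (nat \<lceil>K\<rceil> + 1)"
proof -
  define Sf where "Sf = (\<lambda>n. \<Sum>k=1..n. q k)"
  have eS: "eta q (real n) = Sf n" for n unfolding Sf_def by (rule eta_nat)
  have Smono: "m \<le> n \<Longrightarrow> Sf m \<le> Sf n" for m n unfolding Sf_def by (rule S_mono[OF q0])
  have Sscale: "m \<ge> 2 * N \<Longrightarrow> k \<ge> 1 \<Longrightarrow> Sf (k*m) \<le> 2 * real k * Sf m" for k m
    unfolding Sf_def by (rule S_scale[OF q0 N dec])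
  define m0 where "m0 = nat \<lfloor>r\<rfloor>"
  have r0: "r \<ge> 0" using r3 by simp
  have m0r: "real m0 \<le> r" "r < real m0 + 1" using r0 unfolding m0_def by linarith+
  have m0N: "m0 \<ge> 2 * N" "m0 \<ge> n0" using r3 r0 unfolding m0_def by linarith+
  have er1: "eta q r \<ge> Sf m0" using eta_mono[of q, OF q0, of "real m0" r] m0r eS by simp
  have er2: "eta q r \<le> Sf (m0 + 1)" using eta_mono[of q, OF q0, of r "real (m0+1)"] m0r r0 eS[of "m0+1"] by (simp del: of_nat_Suc add: add.commute)
  have "Sf m0 \<ge> q n0" unfolding Sf_def
    by (rule member_le_sum) (use q0 n0 m0N in auto)
  then have epos: "eta q r > 0" using er1 n0 by linarith
  define kK where "kK = nat \<lceil>K\<rceil> + 1"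
  define kd where "kd = nat \<lceil>1/\<delta>\<rceil>"
  have kK1: "real kK \<ge> K + 1" unfolding kK_def by linarith
  have up: "Zt \<le> kK * m0"
  proof -
    have kr0: "K * r \<ge> 0" using K r0 by simp
    have "real (nat \<lfloor>K * r\<rfloor>) = real_of_int \<lfloor>K * r\<rfloor>" using kr0 by simp
    moreover have "real Zt \<le> real (nat \<lfloor>K * r\<rfloor>)" using Z2 by simp
    ultimately have "real Zt \<le> K * r" by linarith
    also have "K * r \<le> (K+1) * (r - 1)" using r1 by (simp add: algebra_simps)
    also have "\<dots> \<le> real kK * real m0"
      by (rule mult_mono) (use kK1 m0r r1 K in auto)
    finally show ?thesis by (simp flip: of_nat_mult)
  qed
  have "Sf Zt \<le> Sf (kK * m0)" by (rule Smono[OF up])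
  also have "\<dots> \<le> 2 * real kK * Sf m0" by (rule Sscale) (use m0N in \<open>auto simp: kK_def\<close>)
  also have "\<dots> \<le> 2 * real kK * eta q r" using er1 by (intro mult_left_mono) auto
  finally have U: "eta q (real Zt) / eta q r \<le> 2 * real kK"
    using epos eS by (simp add: divide_le_eq)
  define m where "m = nat \<lfloor>\<delta> * r\<rfloor> + 1"
  have mZ: "m \<le> Zt" using Z1 by (simp add: m_def)
  have dr0: "\<delta> * r \<ge> 0" using \<delta> r0 by simp
  have mN: "m \<ge> 2 * N" using r2 dr0 unfolding m_def by linarith
  have mgt: "real m > \<delta> * r" using dr0 unfolding m_def by linarith
  have kd1: "real kd \<ge> 1/\<delta>" unfolding kd_def by linarith
  have c: "\<lceil>1/\<delta>\<rceil> > 0" using \<delta> by simp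
  have kdpos: "kd \<ge> 1" using c unfolding kd_def by (metis One_nat_def Suc_leI zero_less_nat_eq)
  have "real kd * real m \<ge> (1/\<delta>) * real m" by (rule mult_right_mono) (use kd1 in auto)
  moreover have "(1/\<delta>) * real m > (1/\<delta>) * (\<delta> * r)" using mgt \<delta> by (simp add: field_simps)
  moreover have "(1/\<delta>) * (\<delta> * r) = r" using \<delta> by simp
  ultimately have "real (kd * m) > r" by simp
  then have lo: "m0 + 1 \<le> kd * m" using m0r by linarith
  have "eta q r \<le> Sf (m0 + 1)" by (rule er2)
  also have "\<dots> \<le> Sf (kd * m)" by (rule Smono[OF lo])
  also have "\<dots> \<le> 2 * real kd * Sf m" by (rule Sscale) (use mN kdpos in auto)
  also have "\<dots> \<le> 2 * real kd * Sf Zt" using Smono[OF mZ] by (intro mult_left_mono) auto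
  finally have "eta q r \<le> 2 * real kd * eta q (real Zt)" using eS by simp
  then have L: "1 / (2 * real kd) \<le> eta q (real Zt) / eta q r"
    using epos kdpos by (simp add: field_simps)
  show ?thesis using U L by (simp add: kK_def kd_def)
qed



theorem lemma3p8:
  fixes M :: "'a measure"
    and \<alpha> :: real
    and p :: "nat \<Rightarrow> real"
    and xi0 :: "int \<Rightarrow> 'a \<Rightarrow> real"
    and coin :: "nat \<Rightarrow> 'a \<Rightarrow> bool"
    and Z :: "real \<Rightarrow> 'a \<Rightarrow> nat"
  assumes "prob_space M"
    and alpha: "\<alpha> \<ge> 2"
    and p_range: "\<And>n. 0 \<le> p n \<and> p n \<le> 1"
    and p_mono: "\<exists>N. \<forall>m n. N \<le> m \<longrightarrow> m \<le> n \<longrightarrow> p m \<le> p n"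
    and p_lim: "p \<longlonglongrightarrow> 1"
    and q_nonzero: "\<exists>n\<ge>1. 1 - p n \<noteq> 0"
    and indep: "prob_space.indep_vars M (\<lambda>_. borel)
          (\<lambda>i \<omega>. case i of Inl z \<Rightarrow> xi0 z \<omega> | Inr n \<Rightarrow> of_bool (coin n \<omega>))
          (range Inl \<union> Inr ` {1..})"
    and pareto: "\<And>z x. x \<ge> 1 \<Longrightarrow> measure M {\<omega> \<in> space M. xi0 z \<omega> > x} = x powr (- \<alpha>)"
    and coin_prob: "\<And>n. n \<ge> 1 \<Longrightarrow> measure M {\<omega> \<in> space M. coin n \<omega>} = p n"
    and Z_max: "\<forall>\<^sub>F t in at_top. Z t \<in> measurable M (count_space UNIV) \<and>
                   (AE \<omega> in M. is_max xi0 coin t \<omega> (Z t \<omega>))"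
  shows "\<forall>\<epsilon>>0. \<exists>c C T. 0 < c \<and> c \<le> C \<and>
           (\<forall>t\<ge>T. measure M {\<omega> \<in> space M.
                c \<le> eta (\<lambda>n. 1 - p n) (real (Z t \<omega>)) / eta (\<lambda>n. 1 - p n) (r_scale \<alpha> t) \<and>
                eta (\<lambda>n. 1 - p n) (real (Z t \<omega>)) / eta (\<lambda>n. 1 - p n) (r_scale \<alpha> t) \<le> C}
              \<ge> 1 - \<epsilon>)"
proof -
  interpret P: prob_space M by fact
  define q where "q = (\<lambda>n. 1 - p n)"
  have q0: "\<And>k. 0 \<le> q k" and q1: "\<And>k. q k \<le> 1" using p_range by (auto simp: q_def)
  obtain N0 where N0: "\<forall>m n. N0 \<le> m \<longrightarrow> m \<le> n \<longrightarrow> p m \<le> p n" using p_mono by blast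
  define N where "N = max N0 1"
  have N1: "N \<ge> 1" by (simp add: N_def)
  have dec: "\<And>m n. N \<le> m \<Longrightarrow> m \<le> n \<Longrightarrow> q n \<le> q m" using N0 by (auto simp: q_def N_def)
  obtain n0 where n0: "n0 \<ge> 1" "q n0 > 0"
    using q_nonzero q0 unfolding q_def by (metis order_le_less)
  have "eventually (\<lambda>n. p n > 1/2) sequentially" using p_lim by (rule order_tendstoD) simp
  then obtain N2 where N2: "\<And>n. n \<ge> N2 \<Longrightarrow> p n > 1/2" by (auto simp: eventually_sequentially)
  define L where "L = max N2 1"
  have L1: "L \<ge> 1" by (simp add: L_def)
  have pL: "\<And>z. z \<ge> L \<Longrightarrow> p z \<ge> 1/2" using N2 by (force simp: L_def)
  have rv: "\<forall>i\<in>range Inl \<union> Inr ` {1..}.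
      (\<lambda>\<omega>. case i of Inl z \<Rightarrow> xi0 z \<omega> | Inr n \<Rightarrow> (of_bool (coin n \<omega>)::real)) \<in> borel_measurable M"
    using indep unfolding P.indep_vars_def2 by blast
  have meas[measurable]: "\<And>z. xi0 z \<in> borel_measurable M"
  proof -
    fix z :: int have "(Inl z :: int + nat) \<in> range Inl \<union> Inr ` {1..}" by simp
    from rv[rule_format, OF this] show "xi0 z \<in> borel_measurable M" by simp
  qed
  have coin_ev: "{\<omega>\<in>space M. coin z \<omega>} \<in> P.events" if "z \<ge> 1" for z
  proof -
    have "(Inr z :: int + nat) \<in> range Inl \<union> Inr ` {1..}" using that by simp
    from rv[rule_format, OF this]
    have "(\<lambda>\<omega>. (of_bool (coin z \<omega>)::real)) \<in> borel_measurable M" by simp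
    from measurable_sets[OF this, of "{1}"]
    show ?thesis by (simp add: vimage_def Int_def conj_commute)
  qed
  have par: "\<And>z x. x \<ge> 1 \<Longrightarrow> P.prob {\<omega>\<in>space M. xi0 z \<omega> > x} = x powr (-\<alpha>)" using pareto .
  have AE1: "AE \<omega> in M. \<forall>z. xi0 z \<omega> > 1"
  proof (subst AE_all_countable, intro allI)
    fix z
    have "AE \<omega> in M. \<omega> \<in> {\<omega>\<in>space M. xi0 z \<omega> > 1}" by (rule P.AE_prob_1) (simp add: par)
    then show "AE \<omega> in M. xi0 z \<omega> > 1" by (rule eventually_mono) auto
  qed
  show ?thesis
  proof (intro allI impI)
    fix \<epsilon> :: real assume \<epsilon>: "\<epsilon> > 0"
    define e where "e = min \<epsilon> 1 / 3"
    have e0: "e > 0" and e1: "e \<le> 1/3" and e3: "3 * e \<le> \<epsilon>" using \<epsilon> by (auto simp: e_def)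
    have lne: "ln (1/e) \<ge> 0" using e0 e1 by simp
    define \<theta> where "\<theta> = 1 / (8 * (ln (1/e) + 1))"
    have \<theta>0: "\<theta> > 0" using lne by (simp add: \<theta>_def)
    have \<theta>1: "\<theta> \<le> 1/8" using lne by (simp add: \<theta>_def field_simps)
    have \<theta>inv: "1 / (8 * \<theta>) = ln (1/e) + 1" using lne by (simp add: \<theta>_def)
    define \<delta> where "\<delta> = e * \<theta> powr \<alpha> / (2 * 4 powr \<alpha>)"
    have \<delta>0: "\<delta> > 0" using e0 \<theta>0 by (simp add: \<delta>_def)
    define K where "K = 2 * (8*\<alpha>) powr \<alpha> / e"
    have pw8: "(8*\<alpha>) powr \<alpha> \<ge> 1" using alpha by (intro ge_one_powr_ge_zero) auto
    have K1: "K \<ge> 1"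
    proof -
      have "2 * (8*\<alpha>) powr \<alpha> \<ge> 2" using pw8 by simp
      moreover have "2 / e \<ge> 1" using e0 e1 by (simp add: field_simps)
      ultimately show ?thesis unfolding K_def using e0
        by (smt (verit) divide_right_mono)
    qed
    define c where "c = 1 / (2 * real (nat \<lceil>1/\<delta>\<rceil>))"
    define C where "C = 2 * real (nat \<lceil>K\<rceil> + 1)"
    have c0: "c > 0" using \<delta>0 by (simp add: c_def)
    have cC: "c \<le> C"
    proof -
      have "\<lceil>1/\<delta>\<rceil> > 0" using \<delta>0 by simp
      then have "real (nat \<lceil>1/\<delta>\<rceil>) \<ge> 1" by linarith
      then have "c \<le> 1/2" unfolding c_def using \<delta>0 by (intro divide_left_mono) auto
      moreover have "C \<ge> 2" unfolding C_def by simp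
      ultimately show ?thesis by simp
    qed
    define a where "a = (\<lambda>t::real. (t / ln t) powr (1/(\<alpha>-1)))"
    define R0 where "R0 = K + 1 + 2*real N/\<delta> + 4*real L/\<theta> + 1/\<delta> + 2*real N + real n0 + 1"
    define A0 where "A0 = 4/\<theta> + 8*\<alpha>/K + R0 + 1"
    have ev_ln: "\<And>c. eventually (\<lambda>t::real. c \<le> ln t) at_top"
      using ln_at_top unfolding filterlim_at_top by blast
    have ev_a: "\<And>c. eventually (\<lambda>t. c \<le> a t) at_top"
      using a_at_top[OF alpha] unfolding filterlim_at_top a_def by blast
    have "eventually (\<lambda>t. 3 \<le> t \<and> 1 \<le> ln t \<and> A0 \<le> a t \<and> ln (ln t) \<le> ln t / 2 \<and>
        4*\<alpha>*ln(2/\<theta>) \<le> ln t \<and> Z t \<in> measurable M (count_space UNIV) \<and>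
        (AE \<omega> in M. is_max xi0 coin t \<omega> (Z t \<omega>))) at_top"
      by (intro eventually_conj eventually_ge_at_top ev_ln ev_a lnln_ev Z_max)
    then obtain T where T: "\<And>t. t \<ge> T \<Longrightarrow> 3 \<le> t \<and> 1 \<le> ln t \<and> A0 \<le> a t \<and> ln (ln t) \<le> ln t / 2 \<and>
        4*\<alpha>*ln(2/\<theta>) \<le> ln t \<and> Z t \<in> measurable M (count_space UNIV) \<and>
        (AE \<omega> in M. is_max xi0 coin t \<omega> (Z t \<omega>))"
      unfolding eventually_at_top_linorder by blast
    have final: "\<forall>t\<ge>T. measure M {\<omega> \<in> space M.
                c \<le> eta (\<lambda>n. 1 - p n) (real (Z t \<omega>)) / eta (\<lambda>n. 1 - p n) (r_scale \<alpha> t) \<and>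
                eta (\<lambda>n. 1 - p n) (real (Z t \<omega>)) / eta (\<lambda>n. 1 - p n) (r_scale \<alpha> t) \<le> C}
              \<ge> 1 - \<epsilon>"
    proof (intro allI impI)
      fix t assume tT: "t \<ge> T"
      note Tt = T[OF tT]
      have t3: "t \<ge> 3" and lt1: "1 \<le> ln t" and aA: "A0 \<le> a t" and lnln: "ln (ln t) \<le> ln t / 2"
        and lnt4: "4*\<alpha>*ln(2/\<theta>) \<le> ln t" and Zm: "Z t \<in> measurable M (count_space UNIV)"
        and AEmax: "AE \<omega> in M. is_max xi0 coin t \<omega> (Z t \<omega>)" using Tt by auto
      define A where "A = a t"
      define r where "r = r_scale \<alpha> t"
      define y where "y = \<theta> * A / 2"
      have tpos: "t > 0" using t3 by simp
      have lnt_le: "ln t \<le> t - 1" using tpos by (rule ln_le_minus_one)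
      have tl: "t / ln t \<ge> 1" using lt1 lnt_le by (simp add: field_simps)
      have tlpos: "t / ln t > 0" using tl by simp
      have tl_le: "t / ln t \<le> t" using divide_left_mono[of 1 "ln t" t] lt1 tpos t3 by simp
      have R0pos: "R0 \<ge> 0" unfolding R0_def using K1 \<delta>0 \<theta>0 by simp
      have A0ge: "A0 \<ge> R0 + 1" "A0 \<ge> 4/\<theta>" "A0 \<ge> 8*\<alpha>/K"
        unfolding A0_def using R0pos \<theta>0 K1 alpha by simp_all
      have AA0: "A \<ge> A0" using aA by (simp add: A_def)
      have A1: "A \<ge> 1" using AA0 A0ge R0pos by linarith
      have absl: "\<bar>ln t\<bar> = ln t" using lt1 by linarith
      have e1a: "\<alpha>/(\<alpha>-1) = 1/(\<alpha>-1) + 1" using alpha by (simp add: field_simps)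
      have r_eq: "r = A * (t / ln t)"
        unfolding r_def r_scale_def A_def a_def e1a powr_add using tlpos tpos lt1 absl by simp
      have rA: "r = A powr \<alpha>"
        unfolding r_def r_scale_def A_def a_def powr_powr using alpha by simp
      have rpos: "r > 0" unfolding r_eq by (rule mult_pos_pos) (use A1 tlpos in auto)
      have rt: "ln t / t = A / r" using r_eq tpos lt1 A1 by (simp add: field_simps)
      have Apow: "A powr (-\<alpha>) = 1 / r" by (simp add: rA powr_minus_divide)
      have r_ge: "r \<ge> A"
      proof -
        have "A powr 1 \<le> A powr \<alpha>" using A1 alpha by (intro powr_mono) auto
        then show ?thesis using A1 rA by simp
      qed
      have rR0: "r \<ge> R0" using r_ge AA0 A0ge by linarith
      have A_le_t: "A \<le> t"
      proof -
        have "A \<le> (t / ln t) powr 1" unfolding A_def a_def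
          using tl alpha by (intro powr_mono) (auto simp: field_simps)
        then show ?thesis using tlpos tl_le by simp
      qed
      have lnA: "ln A \<ge> ln t / (2*\<alpha>)"
      proof -
        have "ln (t / ln t) = ln t - ln (ln t)" using tpos lt1 by (simp add: ln_div)
        then have h: "ln (t / ln t) \<ge> ln t / 2" using lnln by simp
        have "ln A = ln (t / ln t) / (\<alpha>-1)" unfolding A_def a_def by simp
        also have "\<dots> \<ge> (ln t / 2) / (\<alpha>-1)" using h alpha by (intro divide_right_mono) auto
        also have "(ln t / 2) / (\<alpha>-1) \<ge> (ln t / 2) / \<alpha>" using alpha lt1 by (intro divide_left_mono) auto
        finally show ?thesis by simp
      qed
      have lny: "ln y \<ge> ln t / (4*\<alpha>)"
      proof -
        have "ln y = ln ((\<theta>/2) * A)" unfolding y_def by (simp add: mult.commute)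
        also have "\<dots> = ln (\<theta>/2) + ln A" using \<theta>0 A1 by (intro ln_mult_pos) auto
        finally have "ln y = ln (\<theta>/2) + ln A" .
        moreover have "ln (\<theta>/2) = - ln (2/\<theta>)" using \<theta>0 by (simp add: ln_div)
        moreover have "ln (2/\<theta>) \<le> ln t / (4*\<alpha>)" using lnt4 alpha by (simp add: field_simps)
        moreover have "ln t / (2*\<alpha>) - ln t / (4*\<alpha>) = ln t / (4*\<alpha>)" using alpha by (simp add: field_simps)
        ultimately show ?thesis using lnA by linarith
      qed
      have y1: "y / 2 \<ge> 1"
      proof -
        have "\<theta> * A \<ge> \<theta> * (4/\<theta>)" using AA0 A0ge \<theta>0 by (intro mult_left_mono) auto
        then show ?thesis using \<theta>0 by (simp add: y_def)
      qed
      have \<theta>A1: "\<theta> * A \<ge> 1" using y1 by (simp add: y_def)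
      have ypos: "y > 1" using y1 by simp
      have rR: "r \<ge> K + 1" "r \<ge> 2*real N/\<delta>" "r \<ge> 4*real L/\<theta>" "r \<ge> 1/\<delta>"
        "r \<ge> 2*real N + real n0"
      proof -
        have "2*real N/\<delta> \<ge> 0" "4*real L/\<theta> \<ge> 0" "1/\<delta> \<ge> 0" using \<delta>0 \<theta>0 by auto
        then show "r \<ge> K + 1" "r \<ge> 2*real N/\<delta>" "r \<ge> 4*real L/\<theta>" "r \<ge> 1/\<delta>"
          "r \<ge> 2*real N + real n0" using rR0 K1 unfolding R0_def by linarith+
      qed
      define J where "J = {L..nat \<lfloor>\<theta>/2 * r\<rfloor>}"
      define B1 where "B1 = {\<omega>\<in>space M. \<forall>z\<in>J. \<not> (coin z \<omega> \<and> xi0 (int z) \<omega> > \<theta> * A)}"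
      have Jsub: "J \<subseteq> {1..}" using L1 by (auto simp: J_def)
      have Jfin: "finite J" by (simp add: J_def)
      have Lr: "\<theta>/2 * r \<ge> 2 * real L"
      proof -
        have "\<theta>/2 * r \<ge> \<theta>/2 * (4*real L/\<theta>)" using rR(3) \<theta>0 by (intro mult_left_mono) auto
        then show ?thesis using \<theta>0 by simp
      qed
      have Jne: "J \<noteq> {}" using Lr L1 unfolding J_def by (simp add: le_nat_floor)
      have cardJ: "real (card J) \<ge> \<theta>/2 * r / 2"
      proof -
        have fl0: "\<lfloor>\<theta>/2 * r\<rfloor> \<ge> 0" using Lr by simp
        have LJ: "nat \<lfloor>\<theta>/2 * r\<rfloor> \<ge> L" using Jne by (simp add: J_def)
        have "card J = nat \<lfloor>\<theta>/2 * r\<rfloor> + 1 - L" by (simp add: J_def)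
        then have "real (card J) = real (nat \<lfloor>\<theta>/2 * r\<rfloor>) + 1 - real L" using LJ by (simp add: of_nat_diff)
        also have "real (nat \<lfloor>\<theta>/2 * r\<rfloor>) = real_of_int \<lfloor>\<theta>/2 * r\<rfloor>" using fl0 by simp
        finally have cj: "real (card J) = real_of_int \<lfloor>\<theta>/2 * r\<rfloor> + 1 - real L" .
        have "real_of_int \<lfloor>\<theta>/2 * r\<rfloor> \<ge> \<theta>/2 * r - 1" by linarith
        then show ?thesis using cj Lr by linarith
      qed
      define w where "w = (\<theta> * A) powr (-\<alpha>)"
      have w_eq: "w = \<theta> powr (-\<alpha>) / r" unfolding w_def powr_mult Apow by simp
      have w0: "w \<ge> 0" by (simp add: w_def)
      have w1: "w \<le> 1"
      proof -
        have "(\<theta> * A) powr \<alpha> \<ge> 1" using \<theta>A1 alpha by (intro ge_one_powr_ge_zero) auto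
        then show ?thesis unfolding w_def powr_minus_divide by (simp add: divide_le_eq)
      qed
      have pB1: "P.prob B1 = (\<Prod>z\<in>J. (1 - p z * w))"
      proof -
        have "P.prob B1 = (\<Prod>z\<in>J. (1 - P.prob {\<omega>\<in>space M. coin z \<omega>} * P.prob {\<omega>\<in>space M. xi0 (int z) \<omega> > \<theta> * A}))"
          unfolding B1_def by (rule P.block_prob[OF indep Jfin Jsub Jne])
        also have "\<dots> = (\<Prod>z\<in>J. (1 - p z * w))"
          by (rule prod.cong) (use Jsub coin_prob par[OF \<theta>A1] in \<open>auto simp: w_def\<close>)
        finally show ?thesis .
      qed
      have sumJ: "(\<Sum>z\<in>J. p z * w) \<ge> real (card J) * (w/2)"
      proof -
        have "real (card J) * (w/2) \<le> (\<Sum>z\<in>J. p z * w)"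
        proof (rule sum_bounded_below)
          fix i assume "i \<in> J" then have "p i \<ge> 1/2" using pL by (auto simp: J_def)
          from mult_right_mono[OF this w0] show "w/2 \<le> p i * w" by simp
        qed
        then show ?thesis .
      qed
      have th1: "\<theta> powr (1-\<alpha>) \<ge> 1/\<theta>"
      proof -
        have "(1/\<theta>) powr 1 \<le> (1/\<theta>) powr (\<alpha>-1)" using \<theta>0 \<theta>1 alpha by (intro powr_mono) auto
        moreover have "(1/\<theta>) powr (\<alpha>-1) = \<theta> powr (1-\<alpha>)"
          using \<theta>0 by (simp add: powr_divide powr_minus_divide[symmetric])
        ultimately show ?thesis using \<theta>0 by simp
      qed
      have "real (card J) * (w/2) \<ge> (\<theta>/2 * r / 2) * (w/2)" using cardJ w0 by (intro mult_right_mono) auto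
      also have "(\<theta>/2 * r / 2) * (w/2) = \<theta> * \<theta> powr (-\<alpha>) / 8" using rpos unfolding w_eq by (simp add: field_simps)
      also have "\<theta> * \<theta> powr (-\<alpha>) = \<theta> powr (1-\<alpha>)" using \<theta>0 unfolding diff_conv_add_uminus powr_add by simp
      finally have "real (card J) * (w/2) \<ge> \<theta> powr (1-\<alpha>) / 8" by simp
      moreover have "\<theta> powr (1-\<alpha>) / 8 \<ge> 1 / (8*\<theta>)" using th1 by simp
      ultimately have "(\<Sum>z\<in>J. p z * w) \<ge> ln (1/e)" using sumJ \<theta>inv by linarith
      have pB1e: "P.prob B1 \<le> e"
      proof -
        have "P.prob B1 \<le> exp (- (\<Sum>z\<in>J. p z * w))"
          unfolding pB1 by (rule prod_exp_bound[OF Jfin]) (use p_range w0 w1 in \<open>auto intro: mult_le_one\<close>)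
        also have "\<dots> \<le> exp (- ln (1/e))" using \<open>(\<Sum>z\<in>J. p z * w) \<ge> ln (1/e)\<close> by simp
        also have "\<dots> = e" using e0 by (simp add: ln_div)
        finally show ?thesis .
      qed
      define Mn where "Mn = nat \<lfloor>\<delta> * r\<rfloor>"
      define B2 where "B2 = {\<omega>\<in>space M. \<exists>z\<le>Mn. xi0 (int z) \<omega> > y/2}"
      have pB2e: "P.prob B2 \<le> e"
      proof -
        have "P.prob B2 \<le> real (Mn+1) * (y/2) powr (-\<alpha>)"
          unfolding B2_def by (rule P.B2_bound[OF meas par y1])
        also have "(y/2) powr (-\<alpha>) = (\<theta>/4) powr (-\<alpha>) / r"
        proof -
          have ye: "y/2 = (\<theta>/4) * A" by (simp add: y_def)
          show ?thesis unfolding ye powr_mult Apow by simp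
        qed
        also have "real (Mn+1) \<le> 2 * \<delta> * r"
        proof -
          have dr1: "\<delta> * r \<ge> 1" using rR(4) \<delta>0 by (simp add: field_simps)
          have "real_of_int \<lfloor>\<delta> * r\<rfloor> \<le> \<delta> * r" by simp
          moreover have "real Mn = real_of_int \<lfloor>\<delta> * r\<rfloor>" using dr1 by (simp add: Mn_def)
          ultimately show ?thesis using dr1 of_nat_Suc[of Mn] by linarith
        qed
        then have "real (Mn+1) * ((\<theta>/4) powr (-\<alpha>) / r) \<le> 2 * \<delta> * r * ((\<theta>/4) powr (-\<alpha>) / r)"
          by (intro mult_right_mono) (use rpos in auto)
        also have "\<dots> = 2 * \<delta> * (\<theta>/4) powr (-\<alpha>)" using rpos by simp
        also have "(\<theta>/4) powr (-\<alpha>) = 4 powr \<alpha> / \<theta> powr \<alpha>"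
          using \<theta>0 by (simp add: powr_minus_divide powr_divide)
        also have "2 * \<delta> * (4 powr \<alpha> / \<theta> powr \<alpha>) = e"
          using \<theta>0 unfolding \<delta>_def by (simp add: field_simps)
        finally show ?thesis by simp
      qed
      define n1 where "n1 = nat \<lfloor>K * r\<rfloor> + 1"
      define b where "b = (\<lambda>z::nat. (real z / t) * ln y / 2)"
      define B3 where "B3 = {\<omega>\<in>space M. \<exists>z\<ge>n1. xi0 (int z) \<omega> > b z}"
      have n1pos: "n1 \<ge> 1" by (simp add: n1_def)
      have Kr0: "K * r \<ge> 0" using K1 rpos by simp
      have n1Kr: "real n1 \<ge> K * r"
      proof -
        have "real (nat \<lfloor>K * r\<rfloor>) = real_of_int \<lfloor>K * r\<rfloor>" using Kr0 by simp
        then show ?thesis unfolding n1_def by linarith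
      qed
      define \<kappa> where "\<kappa> = (8*\<alpha>) powr \<alpha> * r powr (\<alpha>-1)"
      have \<kappa>0: "\<kappa> \<ge> 0" by (simp add: \<kappa>_def)
      have bz: "b z \<ge> real z * A / (8*\<alpha>*r)" if "z \<ge> n1" for z
      proof -
        have "b z = (real z / 2) * (ln y / t)" by (simp add: b_def field_simps)
        also have "ln y / t \<ge> (ln t / (4*\<alpha>)) / t" using lny tpos by (intro divide_right_mono) auto
        then have "(real z / 2) * (ln y / t) \<ge> (real z / 2) * ((ln t / (4*\<alpha>)) / t)"
          by (intro mult_left_mono) auto
        moreover have "(real z / 2) * ((ln t / (4*\<alpha>)) / t) = real z * (ln t / t) / (8*\<alpha>)"
          using alpha by (simp add: field_simps)
        ultimately show ?thesis unfolding rt by (simp add: field_simps)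
      qed
      have bz1: "real z * A / (8*\<alpha>*r) \<ge> 1" if "z \<ge> n1" for z
      proof -
        have "real z \<ge> K * r" using n1Kr that by linarith
        then have h1: "real z * A \<ge> K * r * A" using A1 by (intro mult_right_mono) auto
        have "K * A \<ge> K * (8*\<alpha>/K)" using AA0 A0ge K1 by (intro mult_left_mono) auto
        then have h2: "K * A \<ge> 8*\<alpha>" using K1 by simp
        have h3: "K * r * A \<ge> 8*\<alpha>*r" using mult_right_mono[OF h2, of r] rpos by (simp add: algebra_simps)
        have "real z * A \<ge> 8*\<alpha>*r" using h1 h3 by linarith
        then show ?thesis using alpha rpos by (simp add: le_divide_eq)
      qed
      have b1: "b z \<ge> 1" if "z \<ge> n1" for z using bz[OF that] bz1[OF that] by linarith
      have bpow: "b z powr (-\<alpha>) \<le> \<kappa> * real z powr (-\<alpha>)" if "z \<ge> n1" for z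
      proof -
        have z0: "real z > 0" using that n1pos by simp
        have "b z powr (-\<alpha>) \<le> (real z * A / (8*\<alpha>*r)) powr (-\<alpha>)"
          using bz[OF that] bz1[OF that] alpha by (intro powr_mono2') auto
        also have "(real z * A / (8*\<alpha>*r)) = real z * (A / (8*\<alpha>*r))" by simp
        also have "(real z * (A / (8*\<alpha>*r))) powr (-\<alpha>) = real z powr (-\<alpha>) * (A / (8*\<alpha>*r)) powr (-\<alpha>)"
          by (rule powr_mult)
        also have "(A / (8*\<alpha>*r)) powr (-\<alpha>) = (8*\<alpha>) powr \<alpha> * (r powr \<alpha> * A powr (-\<alpha>))"
          using A1 alpha rpos by (simp add: powr_divide powr_mult powr_minus_divide)
        also have "r powr \<alpha> * A powr (-\<alpha>) = r powr (\<alpha>-1)"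
          unfolding Apow using rpos by (simp add: powr_diff)
        finally show ?thesis by (simp add: \<kappa>_def mult.assoc mult.commute)
      qed
      have bpow': "b (n1+i) powr (-\<alpha>) \<le> \<kappa> * real (n1+i) powr (-\<alpha>)" for i by (rule bpow) simp
      have tail: "summable (\<lambda>i. real (n1+i) powr (-\<alpha>))" "(\<Sum>i. real (n1+i) powr (-\<alpha>)) \<le> 2 * real n1 powr (1-\<alpha>)"
        using tail_sum[OF n1pos alpha] by auto
      have bs: "summable (\<lambda>i. b (n1+i) powr (-\<alpha>))"
        by (rule summable_comparison_test'[of "\<lambda>i. \<kappa> * real (n1+i) powr (-\<alpha>)" 0])
           (use tail(1) bpow' in \<open>auto intro: summable_mult\<close>)
      have pB3e: "P.prob B3 \<le> e"
      proof -
        have "P.prob B3 \<le> (\<Sum>i. b (n1+i) powr (-\<alpha>))"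
          unfolding B3_def by (rule P.B3_bound[OF meas par b1 bs])
        also have "\<dots> \<le> (\<Sum>i. \<kappa> * real (n1+i) powr (-\<alpha>))"
          by (rule suminf_le) (use bpow' bs tail(1) in \<open>auto intro: summable_mult\<close>)
        also have "\<dots> = \<kappa> * (\<Sum>i. real (n1+i) powr (-\<alpha>))"
          using tail(1) by (rule suminf_mult)
        also have "\<dots> \<le> \<kappa> * (2 * real n1 powr (1-\<alpha>))"
          using tail(2) \<kappa>0 by (intro mult_left_mono) auto
        also have "real n1 powr (1-\<alpha>) \<le> (K * r) powr (1-\<alpha>)"
          using n1Kr alpha K1 rpos by (intro powr_mono2') auto
        then have "\<kappa> * (2 * real n1 powr (1-\<alpha>)) \<le> \<kappa> * (2 * (K * r) powr (1-\<alpha>))"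
          using \<kappa>0 by (intro mult_left_mono) auto
        also have "\<kappa> * (2 * (K * r) powr (1-\<alpha>)) = 2 * (8*\<alpha>) powr \<alpha> * K powr (1-\<alpha>)"
        proof -
          have "r powr (\<alpha>-1) * r powr (1-\<alpha>) = 1" using rpos by (simp add: powr_add[symmetric])
          then show ?thesis unfolding \<kappa>_def powr_mult by (simp add: algebra_simps)
        qed
        also have "K powr (1-\<alpha>) \<le> K powr (-1)" using K1 alpha by (intro powr_mono) auto
        then have "2 * (8*\<alpha>) powr \<alpha> * K powr (1-\<alpha>) \<le> 2 * (8*\<alpha>) powr \<alpha> * K powr (-1)"
          by (intro mult_left_mono) auto
        also have "2 * (8*\<alpha>) powr \<alpha> * K powr (-1) = e"
          using K1 e0 pw8 alpha unfolding powr_minus_divide K_def by (simp add: field_simps)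
        finally show ?thesis .
      qed
      have AEg: "AE \<omega> in M. (\<forall>z. xi0 z \<omega> > 1) \<and> is_max xi0 coin t \<omega> (Z t \<omega>)"
        using AE1 AEmax by eventually_elim auto
      then obtain Nn where Nn: "{\<omega>\<in>space M. \<not> ((\<forall>z. xi0 z \<omega> > 1) \<and> is_max xi0 coin t \<omega> (Z t \<omega>))} \<subseteq> Nn"
        "emeasure M Nn = 0" "Nn \<in> sets M" by (rule AE_E)
      have pNn: "P.prob Nn = 0" using Nn(2) by (simp add: measure_def)
      have B1m: "B1 \<in> sets M" unfolding B1_def
      proof (rule sets.sets_Collect_finite_All[OF _ Jfin])
        fix z assume zJ: "z \<in> J"
        have "{\<omega>\<in>space M. \<not> (coin z \<omega> \<and> xi0 (int z) \<omega> > \<theta> * A)}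
            = space M - ({\<omega>\<in>space M. coin z \<omega>} \<inter> {\<omega>\<in>space M. xi0 (int z) \<omega> > \<theta> * A})" by auto
        moreover have "{\<omega>\<in>space M. coin z \<omega>} \<in> sets M" using coin_ev zJ Jsub by auto
        moreover have "{\<omega>\<in>space M. xi0 (int z) \<omega> > \<theta> * A} \<in> sets M" by measurable
        ultimately show "{\<omega>\<in>space M. \<not> (coin z \<omega> \<and> xi0 (int z) \<omega> > \<theta> * A)} \<in> sets M" by auto
      qed
      have B2m: "B2 \<in> sets M" unfolding B2_def by measurable
      have B3m: "B3 \<in> sets M" unfolding B3_def by measurable
      define Tg where "Tg = {\<omega> \<in> space M.
                c \<le> eta (\<lambda>n. 1 - p n) (real (Z t \<omega>)) / eta (\<lambda>n. 1 - p n) (r_scale \<alpha> t) \<and>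
                eta (\<lambda>n. 1 - p n) (real (Z t \<omega>)) / eta (\<lambda>n. 1 - p n) (r_scale \<alpha> t) \<le> C}"
      define U where "U = B1 \<union> B2 \<union> B3 \<union> Nn"
      have Um: "U \<in> sets M" unfolding U_def using B1m B2m B3m Nn(3) by auto
      have pU: "P.prob U \<le> 3 * e"
      proof -
        have "P.prob U \<le> P.prob (B1 \<union> B2 \<union> B3) + P.prob Nn"
          unfolding U_def by (rule measure_Un_le) (use B1m B2m B3m Nn(3) in auto)
        also have "P.prob (B1 \<union> B2 \<union> B3) \<le> P.prob (B1 \<union> B2) + P.prob B3"
          by (rule measure_Un_le) (use B1m B2m B3m in auto)
        also have "P.prob (B1 \<union> B2) \<le> P.prob B1 + P.prob B2"
          by (rule measure_Un_le) (use B1m B2m in auto)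
        finally show ?thesis using pB1e pB2e pB3e pNn by linarith
      qed
      have sub: "space M - U \<subseteq> Tg"
      proof
        fix \<omega> assume \<omega>: "\<omega> \<in> space M - U"
        then have \<omega>s: "\<omega> \<in> space M" and nB1: "\<omega> \<notin> B1" and nB2: "\<omega> \<notin> B2" and nB3: "\<omega> \<notin> B3"
          and nN: "\<omega> \<notin> Nn" by (auto simp: U_def)
        from nN Nn(1) \<omega>s have gt1: "\<forall>z. xi0 z \<omega> > 1" and mx: "is_max xi0 coin t \<omega> (Z t \<omega>)" by auto
        from nB1 \<omega>s obtain zs where zsJ: "zs \<in> J" and czs: "coin zs \<omega>" and xzs: "xi0 (int zs) \<omega> > \<theta> * A"
          by (auto simp: B1_def)
        have zs1: "zs \<ge> 1" using zsJ Jsub by auto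
        have zsD: "zs \<in> Dset xi0 coin \<omega>" using zs1 czs by (simp add: Dset_def xi_def)
        have psi: "Psi xi0 coin t \<omega> (int zs) = xi0 (int zs) \<omega> - (real zs / t) * ln (xi0 (int zs) \<omega>)"
          by (simp add: Psi_def xi_def)
        define s where "s = real zs / t"
        have s0: "s \<ge> 0" using tpos by (simp add: s_def)
        have zsr: "real zs \<le> \<theta>/2 * r"
        proof -
          have "zs \<le> nat \<lfloor>\<theta>/2 * r\<rfloor>" using zsJ by (simp add: J_def)
          moreover have "real (nat \<lfloor>\<theta>/2 * r\<rfloor>) = real_of_int \<lfloor>\<theta>/2 * r\<rfloor>" using Lr by simp
          ultimately show ?thesis by linarith
        qed
        have sb: "s \<le> \<theta>/2 * A / ln t"
        proof -
          have "s \<le> \<theta>/2 * r / t" unfolding s_def using zsr tpos by (intro divide_right_mono) auto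
          also have "\<theta>/2 * r / t = \<theta>/2 * (r / t)" by simp
          also have "r / t = A / ln t" using r_eq tpos lt1 by (simp add: field_simps)
          finally show ?thesis by simp
        qed
        have sA: "s \<le> \<theta> * A"
        proof -
          have "\<theta>/2 * A / ln t \<le> \<theta>/2 * A / 1" using lt1 \<theta>0 A1 by (intro divide_left_mono) auto
          moreover have "\<theta>/2 * A / 1 = (\<theta> * A) / 2" by simp
          ultimately show ?thesis using sb \<theta>A1 by linarith
        qed
        have lnthA: "0 \<le> ln (\<theta> * A)" "ln (\<theta> * A) \<le> ln t"
        proof -
          show "0 \<le> ln (\<theta> * A)" using \<theta>A1 by simp
          have "\<theta> * A \<le> A" using \<theta>1 A1 by simp
          then show "ln (\<theta> * A) \<le> ln t" using A_le_t \<theta>A1 by simp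
        qed
        have "\<theta> * A - s * ln (\<theta> * A) \<le> xi0 (int zs) \<omega> - s * ln (xi0 (int zs) \<omega>)"
          using s0 sA \<theta>A1 xzs by (intro psi_mono) auto
        moreover have "s * ln (\<theta> * A) \<le> (\<theta>/2 * A / ln t) * ln t"
          using sb s0 lnthA by (intro mult_mono) auto
        moreover have "(\<theta>/2 * A / ln t) * ln t = \<theta>/2 * A" using lt1 by simp
        ultimately have Pzs: "Psi xi0 coin t \<omega> (int zs) \<ge> y"
          unfolding psi s_def[symmetric] y_def by linarith
        have low: "\<forall>z\<le>Mn. xi0 (int z) \<omega> \<le> y/2" using nB2 \<omega>s by (auto simp: B2_def not_less)
        have high: "\<forall>z\<ge>n1. xi0 (int z) \<omega> \<le> (real z / t) * ln y / 2" using nB3 \<omega>s by (auto simp: B3_def b_def not_less)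
        have ZZ: "Mn < Z t \<omega> \<and> Z t \<omega> < n1"
          by (rule det_core[OF mx gt1 tpos ypos zsD Pzs low high n1pos])
        have Z1: "nat \<lfloor>\<delta> * r\<rfloor> < Z t \<omega>" using ZZ by (simp add: Mn_def)
        have Z2: "Z t \<omega> \<le> nat \<lfloor>K * r\<rfloor>" using ZZ by (simp add: n1_def)
        have r2: "\<delta> * r \<ge> 2 * real N"
        proof -
          have "\<delta> * r \<ge> \<delta> * (2*real N/\<delta>)" using rR(2) \<delta>0 by (intro mult_left_mono) auto
          then show ?thesis using \<delta>0 by simp
        qed
        have RB: "1 / (2 * real (nat \<lceil>1/\<delta>\<rceil>)) \<le> eta q (real (Z t \<omega>)) / eta q r
          \<and> eta q (real (Z t \<omega>)) / eta q r \<le> 2 * real (nat \<lceil>K\<rceil> + 1)"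
          by (rule ratio_bounds[of q, OF q0 N1 dec n0 \<delta>0 K1 rR(1) r2 rR(5) Z1 Z2])
        then show "\<omega> \<in> Tg" using \<omega>s unfolding Tg_def c_def C_def q_def r_def by simp
      qed
      have Tgm: "Tg \<in> sets M"
      proof -
        have "Z t -` {n. c \<le> eta (\<lambda>n. 1 - p n) (real n) / eta (\<lambda>n. 1 - p n) (r_scale \<alpha> t) \<and>
                eta (\<lambda>n. 1 - p n) (real n) / eta (\<lambda>n. 1 - p n) (r_scale \<alpha> t) \<le> C} \<inter> space M \<in> sets M"
          by (rule measurable_sets[OF Zm]) simp
        moreover have "Z t -` {n. c \<le> eta (\<lambda>n. 1 - p n) (real n) / eta (\<lambda>n. 1 - p n) (r_scale \<alpha> t) \<and>
                eta (\<lambda>n. 1 - p n) (real n) / eta (\<lambda>n. 1 - p n) (r_scale \<alpha> t) \<le> C} \<inter> space M = Tg"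
          unfolding Tg_def by auto
        ultimately show ?thesis by simp
      qed
      have "P.prob (space M - U) \<le> P.prob Tg" by (rule P.finite_measure_mono[OF sub Tgm])
      moreover have "P.prob (space M - U) = 1 - P.prob U" using Um by (rule P.prob_compl)
      ultimately have "P.prob Tg \<ge> 1 - \<epsilon>" using pU e3 by linarith
      then show "measure M {\<omega> \<in> space M.
                c \<le> eta (\<lambda>n. 1 - p n) (real (Z t \<omega>)) / eta (\<lambda>n. 1 - p n) (r_scale \<alpha> t) \<and>
                eta (\<lambda>n. 1 - p n) (real (Z t \<omega>)) / eta (\<lambda>n. 1 - p n) (r_scale \<alpha> t) \<le> C}
              \<ge> 1 - \<epsilon>" by (simp only: Tg_def)
    qed
    show "\<exists>c C T. 0 < c \<and> c \<le> C \<and>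
           (\<forall>t\<ge>T. measure M {\<omega> \<in> space M.
                c \<le> eta (\<lambda>n. 1 - p n) (real (Z t \<omega>)) / eta (\<lambda>n. 1 - p n) (r_scale \<alpha> t) \<and>
                eta (\<lambda>n. 1 - p n) (real (Z t \<omega>)) / eta (\<lambda>n. 1 - p n) (r_scale \<alpha> t) \<le> C}
              \<ge> 1 - \<epsilon>)"
      using c0 cC final by blast
  qed
qed


end
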